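(* Consider any $(M,N)$-VLF code over a DMC $P_{Y|X}$ with finite alphabets. Then for every $n\ge0$, almost surely, $$\mathbb{E}\big[\ln\mathcal{H}(W|Y^n)-\ln\mathcal{H}(W|Y^{n+1})\,\big|\,Y^n\big]\le B.$$
   Context: $B=\max_{x,x'\in\mathcal{X}}D(P_{Y|X}(\cdot|x)\|P_{Y|X}(\cdot|x'))$ (possibly $+\infty$). An $(M,N)$-VLF code has a message $W$ uniform on $\{1,\dots,M\}$ and encoders $X_n=f_n(W,Y^{n-1})$, where conditionally on $(W,X^n,Y^{n-1})$ the output $Y_n$ has law $P_{Y|X}(\cdot|X_n)$ (feedback of past outputs to the encoder). The random conditional entropy is $\mathcal{H}(W|Y^n)=-\sum_{w=1}^M\mathbb{P}(W=w|Y^n)\ln\mathbb{P}(W=w|Y^n)$ (natural logarithms). *)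

theory Defs
  imports Complex_Main "HOL-Library.Extended_Real"
begin

text \<open>A DMC with finite input type 'x and finite output type 'y is a stochastic
  matrix P x y = P_{Y|X}(y|x).\<close>
definition dmc :: "('x::finite \<Rightarrow> 'y::finite \<Rightarrow> real) \<Rightarrow> bool" where
  "dmc P \<longleftrightarrow> (\<forall>x y. 0 \<le> P x y) \<and> (\<forall>x. (\<Sum>y\<in>UNIV. P x y) = 1)"

definition kl_div :: "('x::finite \<Rightarrow> 'y::finite \<Rightarrow> real) \<Rightarrow> 'x \<Rightarrow> 'x \<Rightarrow> ereal" where
  "kl_div P x x' =
     (if \<exists>y. P x y > 0 \<and> P x' y = 0 then \<infinity>
      else ereal (\<Sum>y\<in>UNIV. if P x y = 0 then 0 else P x y * ln (P x y / P x' y)))"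

definition capB :: "('x::finite \<Rightarrow> 'y::finite \<Rightarrow> real) \<Rightarrow> ereal" where
  "capB P = (SUP xx'\<in>UNIV. kl_div P (fst xx') (snd xx'))"

text \<open>Encoders: X_{k+1} = f k w (Y_1 ... Y_k), i.e. 0-indexed time k, applied to
  the list of the first k outputs.  Joint probability P(W = w, Y^n = ys)
  with W uniform on {1..M}.\<close>
definition joint :: "('x::finite \<Rightarrow> 'y::finite \<Rightarrow> real) \<Rightarrow> nat \<Rightarrow>
    (nat \<Rightarrow> nat \<Rightarrow> 'y list \<Rightarrow> 'x) \<Rightarrow> nat \<Rightarrow> 'y list \<Rightarrow> real" where
  "joint P M f w ys =
     (if w \<in> {1..M} then (1 / real M) * (\<Prod>k<length ys. P (f k w (take k ys)) (ys ! k))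
      else 0)"

definition outp :: "('x::finite \<Rightarrow> 'y::finite \<Rightarrow> real) \<Rightarrow> nat \<Rightarrow>
    (nat \<Rightarrow> nat \<Rightarrow> 'y list \<Rightarrow> 'x) \<Rightarrow> 'y list \<Rightarrow> real" where
  "outp P M f ys = (\<Sum>w\<in>{1..M}. joint P M f w ys)"

definition post :: "('x::finite \<Rightarrow> 'y::finite \<Rightarrow> real) \<Rightarrow> nat \<Rightarrow>
    (nat \<Rightarrow> nat \<Rightarrow> 'y list \<Rightarrow> 'x) \<Rightarrow> nat \<Rightarrow> 'y list \<Rightarrow> real" where
  "post P M f w ys = joint P M f w ys / outp P M f ys"

text \<open>Random conditional entropy H(W|Y^n) evaluated at Y^n = ys (0 ln 0 = 0).\<close>
definition condH :: "('x::finite \<Rightarrow> 'y::finite \<Rightarrow> real) \<Rightarrow> nat \<Rightarrow>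
    (nat \<Rightarrow> nat \<Rightarrow> 'y list \<Rightarrow> 'x) \<Rightarrow> 'y list \<Rightarrow> real" where
  "condH P M f ys = - (\<Sum>w\<in>{1..M}. post P M f w ys * ln (post P M f w ys))"

text \<open>E[ ln H(W|Y^n) - ln H(W|Y^{n+1}) | Y^n = ys ], for P(Y^n = ys) > 0.\<close>
definition drift :: "('x::finite \<Rightarrow> 'y::finite \<Rightarrow> real) \<Rightarrow> nat \<Rightarrow>
    (nat \<Rightarrow> nat \<Rightarrow> 'y list \<Rightarrow> 'x) \<Rightarrow> 'y list \<Rightarrow> real" where
  "drift P M f ys =
     (\<Sum>y\<in>UNIV. (outp P M f (ys @ [y]) / outp P M f ys) *
        (ln (condH P M f ys) - ln (condH P M f (ys @ [y]))))"

end

theory Submission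
  imports Defs "HOL-Analysis.Analysis"
begin


definition kf :: "real \<Rightarrow> real" where
  "kf t = 2*t*ln t - (2*t-1)*ln(1-t) + ln(-ln t)"
definition kf' :: "real \<Rightarrow> real" where
  "kf' t = 2*ln t + 2 - 2*ln(1-t) + (2*t-1)/(1-t) + 1/(t*ln t)"
definition kf'' :: "real \<Rightarrow> real" where
  "kf'' t = 2/t + 2/(1-t) + 1/(1-t)^2 - (ln t + 1)/(t*ln t)^2"

lemma kf_deriv: assumes "t \<in> {0<..<1::real}" shows "(kf has_real_derivative kf' t) (at t)"
proof -
  have "ln t < 0" using assms by simp
  have "((\<lambda>t. 2*t*ln t - (2*t-1)*ln(1-t) + ln(-ln t)) has_real_derivative
      (2*ln t + 2) - (2*ln(1-t) - (2*t-1)/(1-t)) + 1/(t*ln t)) (at t)"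
    using assms \<open>ln t < 0\<close> apply (auto intro!: derivative_eq_intros)
    done
  then show ?thesis unfolding kf_def[abs_def] kf'_def by (rule DERIV_cong) (simp add: algebra_simps)
qed

lemma d1: assumes "t \<in> {0<..<1::real}" shows "((\<lambda>t. (2*t-1)/(1-t)) has_real_derivative 1/(1-t)^2) (at t)"
  using assms by (auto intro!: derivative_eq_intros simp: field_simps power2_eq_square)

lemma d2: assumes "t \<in> {0<..<1::real}" shows "((\<lambda>t. 1/(t*ln t)) has_real_derivative -(ln t + 1)/(t*ln t)^2) (at t)"
proof -
  have "ln t < 0" using assms by simp
  then show ?thesis using assms by (auto intro!: derivative_eq_intros simp: field_simps power2_eq_square)
qed

lemma d3: assumes "t \<in> {0<..<1::real}" shows "((\<lambda>t. 2*ln t + 2 - 2*ln(1-t)) has_real_derivative 2/t + 2/(1-t)) (at t)"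
  using assms by (auto intro!: derivative_eq_intros simp: field_simps)

lemma kf'_deriv: assumes "t \<in> {0<..<1::real}" shows "(kf' has_real_derivative kf'' t) (at t)"
proof -
  have "((\<lambda>t. (2*ln t + 2 - 2*ln(1-t)) + (2*t-1)/(1-t) + 1/(t*ln t)) has_real_derivative
     (2/t + 2/(1-t)) + 1/(1-t)^2 + (-(ln t + 1)/(t*ln t)^2)) (at t)"
    by (intro DERIV_add d1 d2 d3 assms)
  then show ?thesis unfolding kf'_def[abs_def] kf''_def by (rule DERIV_cong) (simp add: algebra_simps diff_divide_distrib add_divide_distrib)
qed


lemma kf''_nonneg: assumes "t \<in> {0<..<1::real}" shows "kf'' t \<ge> 0"
proof -
  have t0: "0 < t" "t < 1" using assms by auto
  define l where "l = ln t"
  have l0: "l < 0" using t0 by (simp add: l_def)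
  have lt: "l \<le> t - 1" unfolding l_def using t0 ln_le_minus_one by simp
  have A: "2/t + 2/(1-t) + 1/(1-t)^2 = (1/(1-t)^2 - 1)/t^2"
  proof -
    have d: "1 - t \<noteq> 0" "t \<noteq> 0" using t0 by auto
    show ?thesis using d by (simp add: divide_simps power2_eq_square) algebra
  qed
  have pos: "2/t + 2/(1-t) + 1/(1-t)^2 \<ge> 0" using t0 by simp
  show ?thesis
  proof (cases "l + 1 \<le> 0")
    case True
    have "(l+1)/(t*l)^2 \<le> 0" using True by (simp add: divide_nonpos_nonneg)
    then show ?thesis unfolding kf''_def l_def[symmetric] using pos by linarith
  next
    case False
    have "(1-t)^2 \<le> (-l)^2" using lt t0 l0 by (intro power_mono) auto
    then have "(1-t)^2 \<le> l^2" by simp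
    then have i1: "1/l^2 \<le> 1/(1-t)^2" using t0 l0 by (intro divide_left_mono) auto
    have i2: "1/l \<le> -1" using False l0 by (simp add: divide_le_eq)
    have "(l+1)/(t*l)^2 = (1/l^2 + 1/l)/t^2" using t0 l0 by (simp add: field_simps power2_eq_square)
    also have "\<dots> \<le> (1/(1-t)^2 - 1)/t^2" using i1 i2 t0 by (intro divide_right_mono) auto
    finally show ?thesis unfolding kf''_def l_def[symmetric] A by linarith
  qed
qed

lemma kf_convex: "convex_on {0<..<1} kf"
  by (rule f''_ge0_imp_convex[where f'=kf' and f''=kf''])
     (auto intro: kf_deriv kf'_deriv kf''_nonneg)

lemma kf_tangent: assumes "p \<in> {0<..<1::real}" "t \<in> {0<..<1::real}"
  shows "kf t - kf p \<ge> kf' p * (t - p)"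
  by (rule convex_on_imp_above_tangent[OF kf_convex])
     (use assms in \<open>auto intro!: has_field_derivative_at_within kf_deriv[OF assms(1)] simp: convex_connected\<close>)

lemma star: assumes "p \<in> {0<..<1::real}"
  shows "\<exists>c. \<forall>t\<in>{0<..<1::real}.
    ln (-(p*ln p)) - ln (-(t*ln t)) \<le> (2*t-1)*(ln((1-p)*t) - ln(p*(1-t))) + c*(t/p - 1)"
proof (intro exI ballI)
  fix t :: real assume t: "t \<in> {0<..<1}"
  define c where "c = p * (- kf' p - 2*(ln(1-p) - ln p))"
  have p0: "0<p" "p<1" "ln p < 0" using assms by auto
  have t0: "0<t" "t<1" "ln t < 0" using t by auto
  have e1: "ln (-(p*ln p)) = ln p + ln (-ln p)" proof -
    have "-(p*ln p) = p*(-ln p)" by simp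
    then show ?thesis using p0 by (simp only: ln_mult) simp
  qed
  have e2: "ln (-(t*ln t)) = ln t + ln (-ln t)" proof -
    have "-(t*ln t) = t*(-ln t)" by simp
    then show ?thesis using t0 by (simp only: ln_mult) simp
  qed
  have e3: "ln((1-p)*t) - ln(p*(1-t)) = ln(1-p) + ln t - ln p - ln(1-t)"
    using p0 t0 by (simp add: ln_mult)
  have e4: "c*(t/p - 1) = (- kf' p - 2*(ln(1-p) - ln p)) * (t - p)"
    using p0 unfolding c_def by (simp add: field_simps)
  have "kf t - kf p \<ge> kf' p * (t - p)" using kf_tangent assms t by blast
  then show "ln (-(p*ln p)) - ln (-(t*ln t)) \<le> (2*t-1)*(ln((1-p)*t) - ln(p*(1-t))) + c*(t/p - 1)"
    unfolding e1 e2 e3 e4 kf_def by (simp add: algebra_simps)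
qed


definition kt :: "real \<Rightarrow> real \<Rightarrow> real" where
  "kt a b = (if a = 0 then 0 else a * ln (a / b))"

lemma xlnx_convex: "convex_on {0<..} (\<lambda>x::real. x * ln x)"
  by (rule f''_ge0_imp_convex[where f'="\<lambda>x. ln x + 1" and f''="\<lambda>x. 1/x"])
     (auto intro!: derivative_eq_intros)

lemma J1:
  assumes "finite V" "(\<Sum>v\<in>V. c v) = 1" "\<And>v. v \<in> V \<Longrightarrow> c v \<ge> 0"
    "\<And>v. v \<in> V \<Longrightarrow> b v > 0" "a > 0"
  shows "kt a (\<Sum>v\<in>V. c v * b v) \<le> (\<Sum>v\<in>V. c v * kt a (b v))"
proof -
  have ne: "V \<noteq> {}" using assms(2) by auto
  have bnn: "\<And>v. v \<in> V \<Longrightarrow> b v \<ge> 0" using assms(4) by (simp add: less_imp_le)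
  have "ln (\<Sum>v\<in>V. c v *\<^sub>R b v) \<ge> (\<Sum>v\<in>V. c v * ln (b v))"
    by (rule concave_on_sum[OF assms(1) ne ln_concave assms(2)]) (use assms in auto)
  then have L: "ln (\<Sum>v\<in>V. c v * b v) \<ge> (\<Sum>v\<in>V. c v * ln (b v))" by simp
  have Spos: "(\<Sum>v\<in>V. c v * b v) > 0"
  proof -
    obtain v where v: "v \<in> V" "c v > 0"
      using assms(2,3) by (metis less_eq_real_def sum_nonpos zero_less_one not_le)
    have "c v * b v \<le> (\<Sum>v\<in>V. c v * b v)"
      by (rule member_le_sum) (use assms(1,3) v bnn in \<open>auto intro!: mult_nonneg_nonneg\<close>)
    moreover have "c v * b v > 0" using v assms(4)[OF v(1)] by simp
    ultimately show ?thesis by linarith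
  qed
  have "kt a (\<Sum>v\<in>V. c v * b v) = a * ln a - a * ln (\<Sum>v\<in>V. c v * b v)"
    using assms(5) Spos by (simp add: kt_def ln_div algebra_simps)
  also have "\<dots> \<le> a * ln a - a * (\<Sum>v\<in>V. c v * ln (b v))"
    using L assms(5) by (simp add: mult_left_mono)
  also have "\<dots> = (\<Sum>v\<in>V. c v * (a * ln a - a * ln (b v)))"
  proof -
    have "(\<Sum>v\<in>V. c v * (a * ln a - a * ln (b v))) = (\<Sum>v\<in>V. c v * (a * ln a)) - (\<Sum>v\<in>V. a * (c v * ln (b v)))"
      by (simp add: sum_subtractf algebra_simps)
    also have "\<dots> = (\<Sum>v\<in>V. c v) * (a * ln a) - a * (\<Sum>v\<in>V. c v * ln (b v))"
      by (simp add: sum_distrib_left sum_distrib_right)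
    finally show ?thesis using assms(2) by simp
  qed
  also have "\<dots> = (\<Sum>v\<in>V. c v * kt a (b v))"
  proof (intro sum.cong refl)
    fix v assume "v \<in> V" then have "b v > 0" by (rule assms(4))
    then show "c v * (a * ln a - a * ln (b v)) = c v * kt a (b v)"
      using assms(5) by (simp add: kt_def ln_div algebra_simps)
  qed
  finally show ?thesis .
qed

lemma J2:
  assumes "finite V" "(\<Sum>v\<in>V. c v) = 1" "\<And>v. v \<in> V \<Longrightarrow> c v \<ge> 0"
    "\<And>v. v \<in> V \<Longrightarrow> b v > 0" "a > 0"
  shows "kt (\<Sum>v\<in>V. c v * b v) a \<le> (\<Sum>v\<in>V. c v * kt (b v) a)"
proof -
  have ne: "V \<noteq> {}" using assms(2) by auto
  have bnn: "\<And>v. v \<in> V \<Longrightarrow> b v \<ge> 0" using assms(4) by (simp add: less_imp_le)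
  have "(\<lambda>x. x * ln x) (\<Sum>v\<in>V. c v *\<^sub>R b v) \<le> (\<Sum>v\<in>V. c v * (\<lambda>x. x * ln x) (b v))"
    by (rule convex_on_sum[OF assms(1) ne xlnx_convex assms(2)]) (use assms in auto)
  then have L: "(\<Sum>v\<in>V. c v * b v) * ln (\<Sum>v\<in>V. c v * b v) \<le> (\<Sum>v\<in>V. c v * (b v * ln (b v)))" by simp
  have Spos: "(\<Sum>v\<in>V. c v * b v) > 0"
  proof -
    obtain v where v: "v \<in> V" "c v > 0"
      using assms(2,3) by (metis less_eq_real_def sum_nonpos zero_less_one not_le)
    have "c v * b v \<le> (\<Sum>v\<in>V. c v * b v)"
      by (rule member_le_sum) (use assms(1,3) v bnn in \<open>auto intro!: mult_nonneg_nonneg\<close>)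
    moreover have "c v * b v > 0" using v assms(4)[OF v(1)] by simp
    ultimately show ?thesis by linarith
  qed
  have "kt (\<Sum>v\<in>V. c v * b v) a = (\<Sum>v\<in>V. c v * b v) * ln (\<Sum>v\<in>V. c v * b v) - (\<Sum>v\<in>V. c v * b v) * ln a"
    using assms(5) Spos by (simp add: kt_def ln_div algebra_simps)
  also have "\<dots> \<le> (\<Sum>v\<in>V. c v * (b v * ln (b v))) - (\<Sum>v\<in>V. c v * b v) * ln a"
    using L by simp
  also have "\<dots> = (\<Sum>v\<in>V. c v * (b v * ln (b v) - b v * ln a))"
  proof -
    have "(\<Sum>v\<in>V. c v * (b v * ln (b v) - b v * ln a)) = (\<Sum>v\<in>V. c v * (b v * ln (b v))) - (\<Sum>v\<in>V. (c v * b v) * ln a)"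
      by (simp add: sum_subtractf algebra_simps)
    also have "\<dots> = (\<Sum>v\<in>V. c v * (b v * ln (b v))) - (\<Sum>v\<in>V. c v * b v) * ln a"
      by (simp add: sum_distrib_right)
    finally show ?thesis by simp
  qed
  also have "\<dots> = (\<Sum>v\<in>V. c v * kt (b v) a)"
  proof (intro sum.cong refl)
    fix v assume "v \<in> V" then have "b v > 0" by (rule assms(4))
    then show "c v * (b v * ln (b v) - b v * ln a) = c v * kt (b v) a"
      using assms(5) by (simp add: kt_def ln_div algebra_simps)
  qed
  finally show ?thesis .
qed



definition Qf :: "'w set \<Rightarrow> ('w \<Rightarrow> real) \<Rightarrow> ('w \<Rightarrow> 'y \<Rightarrow> real) \<Rightarrow> 'y \<Rightarrow> real" where
  "Qf W pp g y = (\<Sum>w\<in>W. pp w * g w y)"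
definition Hf :: "'w set \<Rightarrow> ('w \<Rightarrow> real) \<Rightarrow> real" where
  "Hf W r = - (\<Sum>w\<in>W. r w * ln (r w))"

locale chan =
  fixes W :: "'w set" and pp :: "'w \<Rightarrow> real" and g :: "'w \<Rightarrow> 'y::finite \<Rightarrow> real" and \<beta> :: real
  assumes finW: "finite W"
    and pi_nn: "\<And>w. w \<in> W \<Longrightarrow> pp w \<ge> 0"
    and pi_sum: "(\<Sum>w\<in>W. pp w) = 1"
    and g_nn: "\<And>w y. w \<in> W \<Longrightarrow> g w y \<ge> 0"
    and g_sum: "\<And>w. w \<in> W \<Longrightarrow> (\<Sum>y\<in>UNIV. g w y) = 1"
    and supp: "\<And>w v y. w \<in> W \<Longrightarrow> v \<in> W \<Longrightarrow> g w y > 0 \<Longrightarrow> g v y > 0"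
    and kl: "\<And>w v. w \<in> W \<Longrightarrow> v \<in> W \<Longrightarrow> (\<Sum>y\<in>UNIV. kt (g w y) (g v y)) \<le> \<beta>"
begin

abbreviation "Q \<equiv> Qf W pp g"

lemma Q_nn: "Q y \<ge> 0"
  unfolding Qf_def by (intro sum_nonneg) (simp add: pi_nn g_nn)

lemma Q_sum: "(\<Sum>y\<in>UNIV. Q y) = 1"
proof -
  have "(\<Sum>y\<in>UNIV. Q y) = (\<Sum>w\<in>W. pp w * (\<Sum>y\<in>UNIV. g w y))"
    unfolding Qf_def by (simp add: sum.swap[of _ UNIV] sum_distrib_left)
  also have "\<dots> = 1" using pi_sum by (simp add: g_sum)
  finally show ?thesis .
qed

lemma W_ne: "W \<noteq> {}" using pi_sum by auto

lemma beta_nn: "\<beta> \<ge> 0"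
proof -
  obtain w where "w \<in> W" using W_ne by auto
  have "(\<Sum>y\<in>UNIV. kt (g w y) (g w y)) = 0" by (intro sum.neutral) (simp add: kt_def)
  then show ?thesis using kl[OF \<open>w\<in>W\<close> \<open>w\<in>W\<close>] by simp
qed

lemma Q_zero_g: assumes "Q y = 0" "w \<in> W" "pp w > 0" shows "g w y = 0"
proof -
  have "\<forall>v\<in>W. pp v * g v y = 0"
    using assms(1) unfolding Qf_def by (subst sum_nonneg_eq_0_iff[symmetric]) (auto simp: finW pi_nn g_nn)
  then show ?thesis using assms by auto
qed

lemma Q_pos_g: assumes "Q y > 0" "w \<in> W" shows "g w y > 0"
proof -
  have "\<exists>v. v \<in> W \<and> pp v * g v y \<noteq> 0"
  proof (rule ccontr)
    assume "\<not> (\<exists>v. v \<in> W \<and> pp v * g v y \<noteq> 0)"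
    then have "Q y = 0" unfolding Qf_def by (intro sum.neutral) auto
    then show False using assms(1) by simp
  qed
  then obtain v where v: "v \<in> W" "pp v * g v y \<noteq> 0" by blast
  then have "g v y > 0" using g_nn[of v y] by (auto simp: less_le)
  then show ?thesis using supp v(1) assms(2) by blast
qed


definition "R w y = (Q y - pp w * g w y) / (1 - pp w)"

context fixes w assumes w: "w \<in> W" "0 < pp w" "pp w < 1"
begin

lemma cv_sum: "(\<Sum>v\<in>W-{w}. pp v / (1 - pp w)) = 1"
proof -
  have "(\<Sum>v\<in>W-{w}. pp v) = 1 - pp w" using pi_sum sum.remove[OF finW w(1), of pp] by simp
  then show ?thesis using w by (simp add: sum_divide_distrib[symmetric])
qed

lemma cv_nn: "v \<in> W - {w} \<Longrightarrow> pp v / (1 - pp w) \<ge> 0" using w pi_nn by simp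

lemma R_eq: "R w y = (\<Sum>v\<in>W-{w}. pp v / (1 - pp w) * g v y)"
proof -
  have "Q y = pp w * g w y + (\<Sum>v\<in>W-{w}. pp v * g v y)"
    unfolding Qf_def using sum.remove[OF finW w(1)] by simp
  then show ?thesis unfolding R_def by (simp add: sum_divide_distrib)
qed

lemma D1: "(\<Sum>y\<in>UNIV. kt (g w y) (R w y)) \<le> \<beta>"
proof -
  have "(\<Sum>y\<in>UNIV. kt (g w y) (R w y)) \<le> (\<Sum>y\<in>UNIV. \<Sum>v\<in>W-{w}. pp v / (1 - pp w) * kt (g w y) (g v y))"
  proof (intro sum_mono)
    fix y
    show "kt (g w y) (R w y) \<le> (\<Sum>v\<in>W-{w}. pp v / (1 - pp w) * kt (g w y) (g v y))"
    proof (cases "g w y = 0")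
      case True then show ?thesis by (simp add: kt_def)
    next
      case False
      then have gp: "g w y > 0" using g_nn[OF w(1)] by (simp add: less_le)
      show ?thesis unfolding R_eq
        by (rule J1) (use finW cv_sum cv_nn gp supp w(1) in auto)
    qed
  qed
  also have "\<dots> = (\<Sum>v\<in>W-{w}. pp v / (1 - pp w) * (\<Sum>y\<in>UNIV. kt (g w y) (g v y)))"
    by (simp add: sum.swap[of _ UNIV] sum_distrib_left)
  also have "\<dots> \<le> (\<Sum>v\<in>W-{w}. pp v / (1 - pp w) * \<beta>)"
    by (intro sum_mono mult_left_mono kl w(1)) (use cv_nn in auto)
  also have "\<dots> = (\<Sum>v\<in>W-{w}. pp v / (1 - pp w)) * \<beta>" by (rule sum_distrib_right[symmetric])
  also have "\<dots> = \<beta>" using cv_sum by simp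
  finally show ?thesis .
qed

lemma D2: "(\<Sum>y\<in>UNIV. kt (R w y) (g w y)) \<le> \<beta>"
proof -
  have "(\<Sum>y\<in>UNIV. kt (R w y) (g w y)) \<le> (\<Sum>y\<in>UNIV. \<Sum>v\<in>W-{w}. pp v / (1 - pp w) * kt (g v y) (g w y))"
  proof (intro sum_mono)
    fix y
    show "kt (R w y) (g w y) \<le> (\<Sum>v\<in>W-{w}. pp v / (1 - pp w) * kt (g v y) (g w y))"
    proof (cases "g w y = 0")
      case True
      then have "\<And>v. v \<in> W \<Longrightarrow> g v y = 0" using supp w(1) g_nn by (metis less_le)
      then show ?thesis unfolding R_eq by (simp add: kt_def)
    next
      case False
      then have gp: "g w y > 0" using g_nn[OF w(1)] by (simp add: less_le)
      show ?thesis unfolding R_eq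
        by (rule J2) (use finW cv_sum cv_nn gp supp w(1) in auto)
    qed
  qed
  also have "\<dots> = (\<Sum>v\<in>W-{w}. pp v / (1 - pp w) * (\<Sum>y\<in>UNIV. kt (g v y) (g w y)))"
    by (simp add: sum.swap[of _ UNIV] sum_distrib_left)
  also have "\<dots> \<le> (\<Sum>v\<in>W-{w}. pp v / (1 - pp w) * \<beta>)"
    by (intro sum_mono mult_left_mono kl w(1)) (use cv_nn in auto)
  also have "\<dots> = (\<Sum>v\<in>W-{w}. pp v / (1 - pp w)) * \<beta>" by (rule sum_distrib_right[symmetric])
  also have "\<dots> = \<beta>" using cv_sum by simp
  finally show ?thesis .
qed

lemma R_pos: assumes "Q y > 0" shows "R w y > 0"
proof -
  have "(\<Sum>v\<in>W-{w}. pp v) = 1 - pp w" using pi_sum sum.remove[OF finW w(1), of pp] by simp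
  then have "(\<Sum>v\<in>W-{w}. pp v) \<noteq> 0" using w by simp
  then have "\<exists>v\<in>W - {w}. pp v \<noteq> 0" by (meson sum.neutral)
  then obtain v where v: "v \<in> W - {w}" "pp v \<noteq> 0" by blast
  have "pp v / (1 - pp w) * g v y \<le> (\<Sum>v\<in>W-{w}. pp v / (1 - pp w) * g v y)"
    by (rule member_le_sum) (use v finW pi_nn g_nn w in \<open>auto intro!: divide_nonneg_nonneg mult_nonneg_nonneg\<close>)
  moreover have "pp v / (1 - pp w) * g v y > 0"
    using v pi_nn[of v] w Q_pos_g[OF assms, of v] by (auto simp: less_le)
  ultimately show ?thesis unfolding R_eq by linarith
qed

lemma Tpt:
  assumes c: "\<forall>t\<in>{0<..<1::real}. ln (-(pp w*ln (pp w))) - ln (-(t*ln t))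
        \<le> (2*t-1)*(ln((1-pp w)*t) - ln(pp w*(1-t))) + c*(t/pp w - 1)"
    and Qp: "Q y > 0"
  shows "Q y * (ln (-(pp w*ln (pp w))) - ln (-(pp w * g w y / Q y * ln (pp w * g w y / Q y))))
    \<le> pp w * kt (g w y) (R w y) + (1 - pp w) * kt (R w y) (g w y) + c * (g w y - Q y)"
proof -
  define p where "p = pp w"
  define G where "G = g w y"
  define RR where "RR = R w y"
  define QQ where "QQ = Q y"
  define t where "t = p * G / QQ"
  have p: "0 < p" "p < 1" using w by (auto simp: p_def)
  have G: "G > 0" unfolding G_def by (rule Q_pos_g[OF Qp w(1)])
  have RRp: "RR > 0" unfolding RR_def by (rule R_pos[OF Qp])
  have QQp: "QQ > 0" using Qp by (simp add: QQ_def)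
  have QR: "QQ - p * G = (1 - p) * RR" unfolding RR_def R_def QQ_def p_def G_def using w by simp
  have t0: "0 < t" using p G QQp by (simp add: t_def)
  have t1: "t < 1"
  proof -
    have "p * G < QQ" using QR p RRp proof - have "(1-p)*RR > 0" using p RRp by simp then show ?thesis using QR by linarith qed
    then show ?thesis using QQp by (simp add: t_def)
  qed
  have st: "ln (-(p*ln p)) - ln (-(t*ln t)) \<le> (2*t-1)*(ln((1-p)*t) - ln(p*(1-t))) + c*(t/p - 1)"
    using c t0 t1 by (simp add: p_def)
  have e1: "ln((1-p)*t) - ln(p*(1-t)) = ln G - ln RR"
  proof -
    have "(1-p)*t = (1-p)*p*G/QQ" by (simp add: t_def)
    moreover have "p*(1-t) = (1-p)*p*RR/QQ"
    proof -
      have "1 - t = (QQ - p*G)/QQ" using QQp by (simp add: t_def diff_divide_distrib)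
      then show ?thesis using QR by simp
    qed
    ultimately show ?thesis using p G RRp QQp by (simp add: ln_mult ln_div)
  qed
  have "QQ * (ln (-(p*ln p)) - ln (-(t*ln t))) \<le> QQ * ((2*t-1)*(ln G - ln RR) + c*(t/p - 1))"
    using st e1 QQp by (simp add: mult_left_mono)
  also have "\<dots> = (2*p*G - QQ) * (ln G - ln RR) + c * (G - QQ)"
  proof -
    have a1: "QQ * (2*t-1) = 2*p*G - QQ" using QQp by (simp add: t_def algebra_simps)
    have a2: "QQ * (t/p-1) = G - QQ" using QQp p by (simp add: t_def algebra_simps)
    have "QQ * ((2*t-1)*(ln G - ln RR) + c*(t/p - 1)) = (QQ * (2*t-1))*(ln G - ln RR) + c*(QQ * (t/p - 1))"
      by (simp add: algebra_simps)
    then show ?thesis unfolding a1 a2 .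
  qed
  also have "\<dots> = p * kt G RR + (1 - p) * kt RR G + c * (G - QQ)"
  proof -
    have k1: "kt G RR = G * (ln G - ln RR)" using G RRp by (simp add: kt_def ln_div)
    have k2: "kt RR G = RR * (ln RR - ln G)" using G RRp by (simp add: kt_def ln_div)
    have e: "2*p*G - QQ = p*G - (1-p)*RR" using QR by linarith
    then show ?thesis unfolding k1 k2 e by (simp add: algebra_simps)
  qed
  finally show ?thesis unfolding p_def G_def RR_def QQ_def t_def .
qed

lemma Tsum: "(\<Sum>y\<in>UNIV. pp w * kt (g w y) (R w y) + (1 - pp w) * kt (R w y) (g w y) + c * (g w y - Q y)) \<le> \<beta>"
proof -
  have "(\<Sum>y\<in>UNIV. pp w * kt (g w y) (R w y) + (1 - pp w) * kt (R w y) (g w y) + c * (g w y - Q y))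
    = pp w * (\<Sum>y\<in>UNIV. kt (g w y) (R w y)) + (1 - pp w) * (\<Sum>y\<in>UNIV. kt (R w y) (g w y))
      + c * ((\<Sum>y\<in>UNIV. g w y) - (\<Sum>y\<in>UNIV. Q y))"
    by (simp add: sum.distrib sum_distrib_left sum_subtractf right_diff_distrib)
  also have "\<dots> = pp w * (\<Sum>y\<in>UNIV. kt (g w y) (R w y)) + (1 - pp w) * (\<Sum>y\<in>UNIV. kt (R w y) (g w y))"
    using g_sum[OF w(1)] Q_sum by simp
  also have "\<dots> \<le> pp w * \<beta> + (1 - pp w) * \<beta>"
    using D1 D2 w by (intro add_mono mult_left_mono) auto
  finally show ?thesis by (simp add: algebra_simps)
qed

end


lemma xlnx_nonpos: "0 \<le> r \<Longrightarrow> r \<le> 1 \<Longrightarrow> r * ln r \<le> (0::real)"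
  by (cases "r = 0") (auto intro!: mult_nonneg_nonpos)

lemma pp_le1: "w \<in> W \<Longrightarrow> pp w \<le> 1"
  using member_le_sum[OF _ _ finW, of w pp] pi_nn pi_sum by auto

lemma H_nn: "Hf W pp \<ge> 0"
  unfolding Hf_def using xlnx_nonpos pi_nn pp_le1 by (simp add: sum_nonpos)

lemma case_H0:
  assumes "Hf W pp = 0"
  shows "(\<Sum>y\<in>UNIV. Q y * (ln (Hf W pp) - ln (Hf W (\<lambda>w. pp w * g w y / Q y)))) \<le> \<beta>"
proof -
  have all0: "\<forall>w\<in>W. pp w * ln (pp w) = 0"
  proof -
    have "(\<Sum>w\<in>W. - (pp w * ln (pp w))) = 0" using assms by (simp add: Hf_def sum_negf)
    moreover have "\<forall>w\<in>W. - (pp w * ln (pp w)) \<ge> 0" using xlnx_nonpos pi_nn pp_le1 by (simp)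
    ultimately show ?thesis
      using sum_nonneg_eq_0_iff[OF finW, of "\<lambda>w. - (pp w * ln (pp w))"] by auto
  qed
  have "\<exists>w0\<in>W. pp w0 = 1"
  proof (rule ccontr)
    assume "\<not> ?thesis"
    have "\<forall>w\<in>W. pp w = 0"
    proof
      fix w assume w: "w \<in> W"
      show "pp w = 0"
      proof (rule ccontr)
        assume ne: "pp w \<noteq> 0"
        then have pos: "pp w > 0" using pi_nn[OF w] by simp
        have "ln (pp w) = 0" using all0 w ne by (metis mult_eq_0_iff)
        then have "pp w = 1" using pos by simp
        then show False using \<open>\<not> (\<exists>w0\<in>W. pp w0 = 1)\<close> w by blast
      qed
    qed
    then have "(\<Sum>w\<in>W. pp w) = 0" by simp
    then show False using pi_sum by simp
  qed
  then obtain w0 where w0: "w0 \<in> W" "pp w0 = 1" by blast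
  have oth: "\<forall>v\<in>W-{w0}. pp v = 0"
  proof -
    have "(\<Sum>v\<in>W-{w0}. pp v) = 0" using pi_sum sum.remove[OF finW w0(1), of pp] w0 by simp
    then show ?thesis using sum_nonneg_eq_0_iff[of "W-{w0}" pp] finW pi_nn by auto
  qed
  have "(\<Sum>y\<in>UNIV. Q y * (ln (Hf W pp) - ln (Hf W (\<lambda>w. pp w * g w y / Q y)))) = 0"
  proof (intro sum.neutral ballI)
    fix y
    have Qy: "Q y = g w0 y"
      unfolding Qf_def using sum.remove[OF finW w0(1), of "\<lambda>w. pp w * g w y"] oth w0 by simp
    have "Hf W (\<lambda>w. pp w * g w y / Q y) = 0"
      unfolding Hf_def
    proof -
      have "(\<Sum>w\<in>W. pp w * g w y / Q y * ln (pp w * g w y / Q y)) = 0"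
      proof (intro sum.neutral ballI)
        fix w assume "w \<in> W"
        show "pp w * g w y / Q y * ln (pp w * g w y / Q y) = 0"
        proof (cases "w = w0")
          case True
          show ?thesis
          proof (cases "g w0 y = 0")
            case True then show ?thesis using \<open>w = w0\<close> by simp
          next
            case False then show ?thesis using \<open>w = w0\<close> w0 Qy by simp
          qed
        next
          case False then show ?thesis using oth \<open>w\<in>W\<close> by simp
        qed
      qed
      then show "- (\<Sum>w\<in>W. pp w * g w y / Q y * ln (pp w * g w y / Q y)) = 0" by simp
    qed
    then show "Q y * (ln (Hf W pp) - ln (Hf W (\<lambda>w. pp w * g w y / Q y))) = 0" using assms by simp
  qed
  then show ?thesis using beta_nn by simp
qed


lemma qf_sum: assumes "Q y > 0" shows "(\<Sum>w\<in>W. pp w * g w y / Q y) = 1"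
  using assms unfolding sum_divide_distrib[symmetric] by (simp add: Qf_def)

lemma qf_nn: "w \<in> W \<Longrightarrow> pp w * g w y / Q y \<ge> 0"
  using pi_nn g_nn Q_nn by simp

lemma qf_le1: assumes "Q y > 0" "w \<in> W" shows "pp w * g w y / Q y \<le> 1"
  using member_le_sum[OF assms(2) _ finW, of "\<lambda>w. pp w * g w y / Q y"] qf_nn qf_sum[OF assms(1)] by auto

lemma qf_lt1: assumes "Q y > 0" "w \<in> W" "0 < pp w" "pp w < 1" shows "pp w * g w y / Q y < 1"
proof -
  have "R w y > 0" using R_pos[OF assms(2-4) assms(1)] .
  then have "Q y - pp w * g w y > 0" using assms(4) unfolding R_def by (simp add: zero_less_divide_iff)
  then show ?thesis using assms(1) by simp
qed

lemma case_Hpos: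
  assumes Hp: "Hf W pp > 0"
  shows "(\<Sum>y\<in>UNIV. Q y * (ln (Hf W pp) - ln (Hf W (\<lambda>w. pp w * g w y / Q y)))) \<le> \<beta>"
proof -
  define H0 where "H0 = Hf W pp"
  define Wp where "Wp = {w\<in>W. 0 < pp w \<and> pp w < 1}"
  define a where "a w = - (pp w * ln (pp w)) / H0" for w
  have finWp: "finite Wp" using finW by (simp add: Wp_def)
  have WpW: "Wp \<subseteq> W" by (auto simp: Wp_def)
  have H0p: "H0 > 0" using Hp by (simp add: H0_def)
  have fpos: "- (r * ln r) > 0" if "0 < r" "r < 1" for r :: real
    using that by (simp add: mult_pos_neg)
  have ap: "a w > 0" if "w \<in> Wp" for w
  proof -
    have "- (pp w * ln (pp w)) > 0" using that fpos by (simp add: Wp_def)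
    then show ?thesis using H0p unfolding a_def by (simp add: divide_neg_pos)
  qed
  have H0Wp: "(\<Sum>w\<in>Wp. - (pp w * ln (pp w))) = H0"
  proof -
    have "(\<Sum>w\<in>Wp. - (pp w * ln (pp w))) = (\<Sum>w\<in>W. - (pp w * ln (pp w)))"
    proof (rule sum.mono_neutral_left[OF finW WpW], intro ballI)
      fix w assume "w \<in> W - Wp"
      then have "pp w = 0 \<or> pp w = 1" using pi_nn pp_le1 by (force simp: Wp_def)
      then show "- (pp w * ln (pp w)) = 0" by auto
    qed
    then show ?thesis by (simp add: H0_def Hf_def sum_negf)
  qed
  have a_sum: "(\<Sum>w\<in>Wp. a w) = 1"
    using H0Wp H0p unfolding a_def sum_divide_distrib[symmetric] by simp
  have Wp_ne: "Wp \<noteq> {}" using a_sum by auto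
  have "\<forall>w\<in>Wp. \<exists>c. \<forall>t\<in>{0<..<1::real}. ln (-(pp w*ln (pp w))) - ln (-(t*ln t))
        \<le> (2*t-1)*(ln((1-pp w)*t) - ln(pp w*(1-t))) + c*(t/pp w - 1)"
    using star by (auto simp: Wp_def)
  then obtain cc where cc: "\<And>w. w \<in> Wp \<Longrightarrow> \<forall>t\<in>{0<..<1::real}. ln (-(pp w*ln (pp w))) - ln (-(t*ln t))
        \<le> (2*t-1)*(ln((1-pp w)*t) - ln(pp w*(1-t))) + cc w*(t/pp w - 1)"
    by metis
  define T where "T w y = pp w * kt (g w y) (R w y) + (1 - pp w) * kt (R w y) (g w y) + cc w * (g w y - Q y)" for w y
  have C: "Q y * (ln H0 - ln (Hf W (\<lambda>w. pp w * g w y / Q y))) \<le> (\<Sum>w\<in>Wp. a w * T w y)" for y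
  proof (cases "Q y = 0")
    case True
    have "T w y = 0" if "w \<in> Wp" for w
    proof -
      have w: "w \<in> W" "0 < pp w" using that by (auto simp: Wp_def)
      have "g w y = 0" by (rule Q_zero_g[OF True w])
      then show ?thesis using True by (simp add: T_def R_def kt_def)
    qed
    then show ?thesis using True by simp
  next
    case False
    then have Qp: "Q y > 0" using Q_nn[of y] by simp
    define qf where "qf w = pp w * g w y / Q y" for w
    have q01: "0 < qf w \<and> qf w < 1" if "w \<in> Wp" for w
      using that Q_pos_g[OF Qp, of w] qf_lt1[OF Qp, of w] Qp by (auto simp: Wp_def qf_def)
    define Sq where "Sq = (\<Sum>w\<in>Wp. - (qf w * ln (qf w)))"
    have Sqle: "Sq \<le> Hf W qf"
      unfolding Sq_def Hf_def sum_negf[symmetric]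
    proof (rule sum_mono2[OF finW WpW])
      fix w assume "w \<in> W - Wp"
      then have "0 \<le> qf w" "qf w \<le> 1" using qf_nn qf_le1[OF Qp] by (auto simp: qf_def)
      then show "0 \<le> - (qf w * ln (qf w))" using xlnx_nonpos by simp
    qed
    have Sqp: "Sq > 0" unfolding Sq_def
      by (rule sum_pos[OF finWp Wp_ne]) (use q01 fpos in auto)
    have "ln (\<Sum>w\<in>Wp. a w *\<^sub>R (- (qf w * ln (qf w)) / a w)) \<ge> (\<Sum>w\<in>Wp. a w * ln (- (qf w * ln (qf w)) / a w))"
    proof (rule concave_on_sum[OF finWp Wp_ne ln_concave a_sum])
      fix w assume w: "w \<in> Wp"
      show "0 \<le> a w" using ap[OF w] by simp
      have "- (qf w * ln (qf w)) > 0" using fpos q01[OF w] by blast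
      then show "- (qf w * ln (qf w)) / a w \<in> {0<..}" using ap[OF w] by (simp add: divide_neg_pos)
    qed
    moreover have "(\<Sum>w\<in>Wp. a w *\<^sub>R (- (qf w * ln (qf w)) / a w)) = Sq"
      unfolding Sq_def using ap by (intro sum.cong refl) (simp add: less_imp_neq[symmetric])
    moreover have "(\<Sum>w\<in>Wp. a w * ln (- (qf w * ln (qf w)) / a w))
        = (\<Sum>w\<in>Wp. a w * (ln (- (qf w * ln (qf w))) - ln (- (pp w * ln (pp w))))) + ln H0"
    proof -
      have "(\<Sum>w\<in>Wp. a w * ln (- (qf w * ln (qf w)) / a w))
          = (\<Sum>w\<in>Wp. a w * (ln (- (qf w * ln (qf w))) - ln (- (pp w * ln (pp w)))) + a w * ln H0)"
      proof (intro sum.cong refl)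
        fix w assume w: "w \<in> Wp"
        have pw: "0 < pp w" "pp w < 1" using w by (auto simp: Wp_def)
        have "ln (- (qf w * ln (qf w)) / a w) = ln (- (qf w * ln (qf w))) - ln (a w)"
        proof -
          have "- (qf w * ln (qf w)) > 0" using fpos q01[OF w] by blast
          then show ?thesis using ap[OF w] by (rule ln_divide_pos)
        qed
        moreover have "ln (a w) = ln (- (pp w * ln (pp w))) - ln H0"
        proof -
          have "- (pp w * ln (pp w)) > 0" using fpos[OF pw] by blast
          then show ?thesis using H0p unfolding a_def by (rule ln_divide_pos)
        qed
        ultimately have e: "ln (- (qf w * ln (qf w)) / a w) = (ln (- (qf w * ln (qf w))) - ln (- (pp w * ln (pp w)))) + ln H0"
          by linarith
        show "a w * ln (- (qf w * ln (qf w)) / a w)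
          = a w * (ln (- (qf w * ln (qf w))) - ln (- (pp w * ln (pp w)))) + a w * ln H0"
          unfolding e by (simp add: algebra_simps)
      qed
      also have "\<dots> = (\<Sum>w\<in>Wp. a w * (ln (- (qf w * ln (qf w))) - ln (- (pp w * ln (pp w))))) + (\<Sum>w\<in>Wp. a w) * ln H0"
        by (simp add: sum.distrib sum_distrib_right)
      finally show ?thesis using a_sum by simp
    qed
    ultimately have J: "ln Sq \<ge> (\<Sum>w\<in>Wp. a w * (ln (- (qf w * ln (qf w))) - ln (- (pp w * ln (pp w))))) + ln H0"
      by simp
    have "ln Sq \<le> ln (Hf W qf)" using Sqle Sqp by simp
    then have L: "ln H0 - ln (Hf W qf) \<le> (\<Sum>w\<in>Wp. a w * (ln (- (pp w * ln (pp w))) - ln (- (qf w * ln (qf w)))))"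
      using J by (simp add: sum_subtractf right_diff_distrib)
    have "Q y * (ln H0 - ln (Hf W qf)) \<le> Q y * (\<Sum>w\<in>Wp. a w * (ln (- (pp w * ln (pp w))) - ln (- (qf w * ln (qf w)))))"
      using L Qp by (simp add: mult_left_mono)
    also have "\<dots> = (\<Sum>w\<in>Wp. a w * (Q y * (ln (- (pp w * ln (pp w))) - ln (- (qf w * ln (qf w))))))"
      by (simp add: sum_distrib_left algebra_simps)
    also have "\<dots> \<le> (\<Sum>w\<in>Wp. a w * T w y)"
    proof (intro sum_mono mult_left_mono)
      fix w assume w: "w \<in> Wp"
      have pw: "w \<in> W" "0 < pp w" "pp w < 1" using w by (auto simp: Wp_def)
      show "Q y * (ln (- (pp w * ln (pp w))) - ln (- (qf w * ln (qf w)))) \<le> T w y"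
        unfolding qf_def T_def by (rule Tpt[OF pw cc[OF w] Qp])
      show "0 \<le> a w" using ap[OF w] by simp
    qed
    finally show ?thesis by (simp add: qf_def[abs_def])
  qed
  have "(\<Sum>y\<in>UNIV. Q y * (ln H0 - ln (Hf W (\<lambda>w. pp w * g w y / Q y)))) \<le> (\<Sum>y\<in>UNIV. \<Sum>w\<in>Wp. a w * T w y)"
    by (intro sum_mono C)
  also have "\<dots> = (\<Sum>w\<in>Wp. a w * (\<Sum>y\<in>UNIV. T w y))"
    by (simp add: sum.swap[of _ UNIV] sum_distrib_left)
  also have "\<dots> \<le> (\<Sum>w\<in>Wp. a w * \<beta>)"
  proof (intro sum_mono mult_left_mono)
    fix w assume w: "w \<in> Wp"
    have pw: "w \<in> W" "0 < pp w" "pp w < 1" using w by (auto simp: Wp_def)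
    show "(\<Sum>y\<in>UNIV. T w y) \<le> \<beta>" unfolding T_def by (rule Tsum[OF pw])
    show "0 \<le> a w" using ap[OF w] by simp
  qed
  also have "\<dots> = \<beta>" using a_sum by (simp add: sum_distrib_right[symmetric])
  finally show ?thesis by (simp add: H0_def)
qed

theorem main:
  "(\<Sum>y\<in>UNIV. Q y * (ln (Hf W pp) - ln (Hf W (\<lambda>w. pp w * g w y / Q y)))) \<le> \<beta>"
  using case_H0 case_Hpos H_nn by (cases "Hf W pp = 0") auto

end


lemma joint_snoc:
  "joint P M f w (ys @ [y]) = joint P M f w ys * P (f (length ys) w ys) y"
proof -
  have "(\<Prod>k<length (ys@[y]). P (f k w (take k (ys@[y]))) ((ys@[y]) ! k))
      = (\<Prod>k<length ys. P (f k w (take k (ys@[y]))) ((ys@[y]) ! k)) * P (f (length ys) w ys) y"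
    by (simp add: prod.lessThan_Suc)
  also have "(\<Prod>k<length ys. P (f k w (take k (ys@[y]))) ((ys@[y]) ! k))
      = (\<Prod>k<length ys. P (f k w (take k ys)) (ys ! k))"
    by (intro prod.cong refl) (simp add: nth_append)
  finally show ?thesis unfolding joint_def by simp
qed

theorem lemma7:
  fixes P :: "'x::finite \<Rightarrow> 'y::finite \<Rightarrow> real"
    and M :: nat
    and f :: "nat \<Rightarrow> nat \<Rightarrow> 'y list \<Rightarrow> 'x"
    and ys :: "'y list"
  assumes "dmc P"
    and "M \<ge> 1"
    and "outp P M f ys > 0"
  shows "ereal (drift P M f ys) \<le> capB P"
proof (cases "capB P = \<infinity>")
  case True then show ?thesis by simp
next
  case False
  define Ob where "Ob = outp P M f ys"
  have Op: "Ob > 0" using assms(3) by (simp add: Ob_def)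
  define W where "W = {1..M}"
  define pp where "pp w = post P M f w ys" for w
  define g where "g w y = P (f (length ys) w ys) y" for w y
  have Pnn: "\<And>x y. P x y \<ge> 0" and Psum: "\<And>x. (\<Sum>y\<in>UNIV. P x y) = 1"
    using assms(1) by (auto simp: dmc_def)
  have kle: "kl_div P x x' \<le> capB P" for x x'
    unfolding capB_def by (rule SUP_upper2[of "(x,x')"]) auto
  have nosupp: "\<not> (\<exists>y. P x y > 0 \<and> P x' y = 0)" for x x'
  proof
    assume "\<exists>y. P x y > 0 \<and> P x' y = 0"
    then have "kl_div P x x' = \<infinity>" by (simp add: kl_div_def)
    then show False using kle[of x x'] False by simp
  qed
  obtain x0 :: 'x where True by blast
  have "kl_div P x0 x0 = ereal 0"
    unfolding kl_div_def by (auto intro!: sum.neutral)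
  then have "capB P \<ge> 0" using kle[of x0 x0] by (simp add: zero_ereal_def)
  then obtain \<beta> where \<beta>: "capB P = ereal \<beta>" using False by (cases "capB P") auto
  have kdiv: "(\<Sum>y\<in>UNIV. kt (P x y) (P x' y)) \<le> \<beta>" for x x'
  proof -
    have "kl_div P x x' = ereal (\<Sum>y\<in>UNIV. kt (P x y) (P x' y))"
      using nosupp[of x x'] unfolding kl_div_def kt_def by auto
    then show ?thesis using kle[of x x'] \<beta> by simp
  qed
  have jnn: "joint P M f w ys \<ge> 0" for w
    unfolding joint_def using Pnn by (auto intro!: prod_nonneg divide_nonneg_nonneg)
  have outp_eq: "outp P M f ys = (\<Sum>w\<in>W. joint P M f w ys)" by (simp add: outp_def W_def)
  interpret chan W pp g \<beta>
  proof
    show "finite W" by (simp add: W_def)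
    show "\<And>w. w \<in> W \<Longrightarrow> pp w \<ge> 0" using jnn Op by (simp add: pp_def post_def Ob_def)
    show "(\<Sum>w\<in>W. pp w) = 1"
      using Op unfolding pp_def post_def sum_divide_distrib[symmetric] by (simp add: Ob_def outp_eq)
    show "\<And>w y. w \<in> W \<Longrightarrow> g w y \<ge> 0" by (simp add: g_def Pnn)
    show "\<And>w. w \<in> W \<Longrightarrow> (\<Sum>y\<in>UNIV. g w y) = 1" by (simp add: g_def Psum)
    show "\<And>w v y. w \<in> W \<Longrightarrow> v \<in> W \<Longrightarrow> g w y > 0 \<Longrightarrow> g v y > 0"
      unfolding g_def using nosupp Pnn by (metis less_eq_real_def)
    show "\<And>w v. w \<in> W \<Longrightarrow> v \<in> W \<Longrightarrow> (\<Sum>y\<in>UNIV. kt (g w y) (g v y)) \<le> \<beta>"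
      unfolding g_def by (rule kdiv)
  qed
  have jpp: "joint P M f w ys = pp w * Ob" for w using Op by (simp add: pp_def post_def Ob_def)
  have outp_snoc: "outp P M f (ys @ [y]) = Ob * Q y" for y
  proof -
    have "outp P M f (ys @ [y]) = (\<Sum>w\<in>W. joint P M f w ys * g w y)"
      by (simp add: outp_def W_def joint_snoc g_def)
    also have "\<dots> = Ob * Q y" by (simp add: jpp Qf_def sum_distrib_left algebra_simps)
    finally show ?thesis .
  qed
  have post_snoc: "post P M f w (ys @ [y]) = pp w * g w y / Q y" for w y
    unfolding post_def outp_snoc joint_snoc using Op
    by (simp add: g_def[symmetric] jpp)
  have cH: "condH P M f ys = Hf W pp" by (simp add: condH_def Hf_def W_def pp_def)
  have cH2: "condH P M f (ys @ [y]) = Hf W (\<lambda>w. pp w * g w y / Q y)" for y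
    by (simp add: condH_def Hf_def W_def post_snoc)
  have "drift P M f ys = (\<Sum>y\<in>UNIV. Q y * (ln (Hf W pp) - ln (Hf W (\<lambda>w. pp w * g w y / Q y))))"
    unfolding drift_def cH cH2 outp_snoc Ob_def[symmetric] using Op by simp
  also have "\<dots> \<le> \<beta>" by (rule main)
  finally show ?thesis using \<beta> by simp
qed


end
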